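(* Let $(\mathbf{A},E,D)$ be a scheme on $P$ compute nodes with gradient dimension $d\ge1$. If $(\mathbf{A},E,D)$ tolerates $s$ adversarial nodes, then $s\le \frac{P-1}{2}$.
   Context: Fix integers $P\ge 1$ (number of compute nodes) and $d\ge 1$. A scheme is a triple $(\mathbf{A},E,D)$ where $\mathbf{A}\in\{0,1\}^{P\times P}$ is an allocation matrix ($\mathbf{A}_{j,k}=1$ means node $j$ is assigned gradient $k$), $E=(E_1,\dots,E_P)$ with each $E_j:\mathbb{R}^{d\times P}\to\mathbb{R}^d$ an arbitrary function (encoder of node $j$), and $D:\mathbb{R}^{d\times P}\to\mathbb{R}^d$ an arbitrary function (decoder). For $\mathbf{G}=[\mathbf{g}_1,\dots,\mathbf{g}_P]\in\mathbb{R}^{d\times P}$, let $\mathbf{Y}_j=(\mathbf{1}_d\mathbf{A}_{j,\cdot})\odot\mathbf{G}$ (the $d\times P$ matrix whose $k$-th column is $\mathbf{g}_k$ if $\mathbf{A}_{j,k}=1$ and $\mathbf{0}_d$ otherwise), $\mathbf{z}_j=E_j(\mathbf{Y}_j)$, and $\mathbf{Z}^{\mathbf{A},E,\mathbf{G}}=[\mathbf{z}_1,\dots,\mathbf{z}_P]$. The scheme tolerates $s$ adversarial nodes if for every $\mathbf{G}\in\mathbb{R}^{d\times P}$ and every $\mathbf{N}\in\mathbb{R}^{d\times P}$ with at most $s$ nonzero columns, $D(\mathbf{Z}^{\mathbf{A},E,\mathbf{G}}+\mathbf{N})=\mathbf{G}\mathbf{1}_P$. *)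

theory Defs
  imports "HOL-Analysis.Analysis"
begin

text \<open>Matrices in R^(d x P) are rendered as real^'p^'d (rows indexed by 'd,
columns by the node/gradient index 'p); columns are vectors in real^'d.
An allocation matrix A in {0,1}^(P x P) is rendered as a boolean matrix
bool^'p^'p, A $ j $ k = True meaning node j is assigned gradient k.\<close>

definition col :: "real^'p^'d \<Rightarrow> 'p \<Rightarrow> real^'d" where
  "col M k = (\<chi> i. M $ i $ k)"

definition node_input :: "bool^'p^'p \<Rightarrow> real^'p^'d \<Rightarrow> 'p \<Rightarrow> real^'p^'d" where
  "node_input A G j = (\<chi> i k. if A $ j $ k then G $ i $ k else 0)"

definition encoded :: "bool^'p^'p \<Rightarrow> ('p \<Rightarrow> real^'p^'d \<Rightarrow> real^'d) \<Rightarrow> real^'p^'d \<Rightarrow> real^'p^'d" where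
  "encoded A E G = (\<chi> i j. E j (node_input A G j) $ i)"

definition num_nonzero_cols :: "real^'p^'d \<Rightarrow> nat" where
  "num_nonzero_cols N = card {k. col N k \<noteq> 0}"

definition tolerates ::
  "bool^'p^'p \<Rightarrow> ('p \<Rightarrow> real^'p^'d \<Rightarrow> real^'d) \<Rightarrow> (real^'p^'d \<Rightarrow> real^'d) \<Rightarrow> nat \<Rightarrow> bool" where
  "tolerates A E D s \<longleftrightarrow>
     (\<forall>G N. num_nonzero_cols N \<le> s \<longrightarrow> D (encoded A E G + N) = G *v (1 :: real^'p))"

end

theory Submission
  imports Defs
begin

lemma nz_bound:
  fixes N :: "real^'p^'d"
  assumes "\<And>k. k \<in> S \<Longrightarrow> col N k = 0" and "card (- S) \<le> s"
  shows "num_nonzero_cols N \<le> s"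
proof -
  have "{k. col N k \<noteq> 0} \<subseteq> - S" using assms(1) by auto
  hence "card {k. col N k \<noteq> 0} \<le> card (- S)" by (simp add: card_mono)
  thus ?thesis using assms(2) unfolding num_nonzero_cols_def by simp
qed

theorem mainTheorem2:
  fixes A :: "bool^'p^'p" and E :: "'p \<Rightarrow> real^'p^'d \<Rightarrow> real^'d"
    and D :: "real^'p^'d \<Rightarrow> real^'d" and s :: nat
  assumes "tolerates A E D s"
  shows "real s \<le> (real CARD('p) - 1) / 2"
proof (rule ccontr)
  assume "\<not> ?thesis"
  hence "real CARD('p) < real (2 * s + 1)" by (simp add: field_simps)
  hence "CARD('p) < 2 * s + 1" by (simp only: of_nat_less_iff)
  hence P2: "CARD('p) \<le> 2 * s" by linarith
  obtain S1 :: "'p set" where S1: "card S1 = min s CARD('p)"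
    using obtain_subset_with_card_n[of "min s CARD('p)" "UNIV :: 'p set"] by auto
  have cS1: "card S1 \<le> s" using S1 by simp
  have "card (- S1) = CARD('p) - card S1"
    by (simp add: Compl_eq_Diff_UNIV card_Diff_subset)
  hence cS2: "card (- S1) \<le> s" using S1 P2 by (auto simp: min_def)
  have cS1': "card (- (- S1)) \<le> s" using cS1 by simp
  define G0 :: "real^'p^'d" where "G0 = 0"
  define G1 :: "real^'p^'d" where "G1 = (\<chi> i k. 1)"
  define Z0 where "Z0 = encoded A E G0"
  define Z1 where "Z1 = encoded A E G1"
  define M :: "real^'p^'d" where "M = (\<chi> i k. if k \<in> S1 then Z0 $ i $ k else Z1 $ i $ k)"
  have n0: "num_nonzero_cols (M - Z0) \<le> s"
    by (rule nz_bound[OF _ cS2]) (simp add: col_def M_def vec_eq_iff)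
  have n1: "num_nonzero_cols (M - Z1) \<le> s"
    by (rule nz_bound[OF _ cS1']) (simp add: col_def M_def vec_eq_iff)
  have "D (Z0 + (M - Z0)) = G0 *v (1 :: real^'p)"
    using assms n0 unfolding tolerates_def Z0_def by blast
  moreover have "D (Z1 + (M - Z1)) = G1 *v (1 :: real^'p)"
    using assms n1 unfolding tolerates_def Z1_def by blast
  ultimately have "G0 *v (1 :: real^'p) = G1 *v 1" by simp
  moreover have "(G1 *v (1 :: real^'p)) $ undefined = real CARD('p)"
    by (simp add: G1_def matrix_vector_mult_def)
  moreover have "(G0 *v (1 :: real^'p)) $ undefined = 0"
    by (simp add: G0_def)
  ultimately show False by simp
qed

end
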